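(* Let $J_1,J_2$ be abelian topological semigroups and $n\in\mathbf{Z}_+$. If $P^n(J_1)$ is finite dimensional, then $P^n(J_1\times J_2)=\sum_{m=0}^n P^m(J_1)\otimes P^{n-m}(J_2)$, i.e. every $p\in P^n(J_1\times J_2)$ is a finite sum of functions $(s,t)\mapsto f(s)g(t)$ with $f\in P^m(J_1)$, $g\in P^{n-m}(J_2)$ for some $0\le m\le n$, and every such sum lies in $P^n(J_1\times J_2)$.
   Context: $\mathbf{Z}_+=\{0,1,2,\dots\}$. For an abelian topological semigroup $S$, a continuous $p:S\to\mathbf{C}$ is a polynomial of degree at most $n$ if for all $s,t\in S$ the map $m\mapsto p(s+mt)$, $m\in\mathbf{Z}_+$, is a polynomial in $m$ of degree at most $n$; $P^n(S)$ is the space of these. $J_1\times J_2$ carries the product topology and componentwise operation. *)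

theory Defs
  imports "HOL-Analysis.Analysis" "HOL-Library.Product_Plus"
begin

definition top_ab_semigroup :: "'a::{topological_space, ab_semigroup_add} itself \<Rightarrow> bool" where
  "top_ab_semigroup _ \<longleftrightarrow> continuous_on UNIV (\<lambda>z::'a \<times> 'a. fst z + snd z)"

definition add_mult :: "'a::ab_semigroup_add \<Rightarrow> nat \<Rightarrow> 'a \<Rightarrow> 'a" where
  "add_mult s m t = ((\<lambda>x. x + t) ^^ m) s"

definition Pn :: "nat \<Rightarrow> ('a::{topological_space, ab_semigroup_add} \<Rightarrow> complex) set" where
  "Pn n = {p. continuous_on UNIV p \<and>
     (\<forall>s t. \<exists>c::nat \<Rightarrow> complex. \<forall>m::nat. p (add_mult s m t) = (\<Sum>k\<le>n. c k * of_nat m ^ k))}"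

definition fin_dim_fun :: "('a \<Rightarrow> complex) set \<Rightarrow> bool" where
  "fin_dim_fun V \<longleftrightarrow> (\<exists>F. finite F \<and>
     (\<forall>p\<in>V. \<exists>c::('a \<Rightarrow> complex) \<Rightarrow> complex. p = (\<lambda>x. \<Sum>f\<in>F. c f * f x)))"

definition tensor_sum :: "nat \<Rightarrow> ('a::{topological_space, ab_semigroup_add} \<times> 'b::{topological_space, ab_semigroup_add} \<Rightarrow> complex) set" where
  "tensor_sum n = {p. \<exists>(N::nat) (m::nat \<Rightarrow> nat) (f::nat \<Rightarrow> 'a \<Rightarrow> complex) (g::nat \<Rightarrow> 'b \<Rightarrow> complex).
     (\<forall>i<N. m i \<le> n \<and> f i \<in> Pn (m i) \<and> g i \<in> Pn (n - m i)) \<and>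
     p = (\<lambda>(s, t). \<Sum>i<N. f i s * g i t)}"

end

theory Submission
  imports Defs "HOL-Computational_Algebra.Polynomial"
begin

definition Dseq :: "(nat \<Rightarrow> complex) \<Rightarrow> nat \<Rightarrow> complex" where
  "Dseq u = (\<lambda>m. u (Suc m) - u m)"

definition pol :: "nat \<Rightarrow> (nat \<Rightarrow> complex) \<Rightarrow> bool" where
  "pol n u \<longleftrightarrow> (\<exists>P. degree P \<le> n \<and> (\<forall>m. u m = poly P (of_nat m)))"

lemma degree_le_pred:
  assumes "degree (p::complex poly) \<le> Suc n" "coeff p (Suc n) = 0"
  shows "degree p \<le> n"
proof (rule ccontr)
  assume "\<not> degree p \<le> n"
  then have "degree p = Suc n" using assms(1) by simp
  then have "lead_coeff p = 0" using assms(2) by simp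
  then have "p = 0" by simp
  then show False using \<open>degree p = Suc n\<close> by simp
qed

lemma pol_Dseq:
  assumes "pol (Suc n) u" shows "pol n (Dseq u)"
proof -
  obtain P where P: "degree P \<le> Suc n" "\<And>m. u m = poly P (of_nat m)"
    using assms unfolding pol_def by blast
  define Q where "Q = pcompose P [:1,1:] - P"
  have ev: "Dseq u m = poly Q (of_nat m)" for m
    by (simp add: Q_def Dseq_def P(2) poly_pcompose algebra_simps)
  have dc: "degree (pcompose P [:1,1:]) = degree P"
    by (simp add: degree_pcompose)
  have dQ: "degree Q \<le> Suc n"
    unfolding Q_def using degree_diff_le[of "pcompose P [:1,1:]" "Suc n" P] dc P(1) by simp
  have cQ: "coeff Q (Suc n) = 0"
  proof (cases "degree P = Suc n")
    case True
    have "lead_coeff (pcompose P [:1,1:]) = lead_coeff P * lead_coeff [:1,1::complex:] ^ degree P"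
      by (rule lead_coeff_comp) simp
    then have "coeff (pcompose P [:1,1:]) (Suc n) = coeff P (Suc n)"
      using dc True by simp
    then show ?thesis by (simp add: Q_def)
  next
    case False
    then have "degree P < Suc n" using P(1) by simp
    then show ?thesis using dc by (simp add: Q_def coeff_eq_0)
  qed
  show ?thesis unfolding pol_def using degree_le_pred[OF dQ cQ] ev by blast
qed

lemma pol0_Dseq:
  assumes "pol 0 u" shows "Dseq u m = 0"
proof -
  obtain P where P: "degree P \<le> 0" "\<And>m. u m = poly P (of_nat m)"
    using assms unfolding pol_def by blast
  then obtain a where "P = pCons a 0" using degree_eq_zeroE by blast
  then show ?thesis by (simp add: Dseq_def P(2))
qed

lemma pol_Dpow: "pol n u \<Longrightarrow> (Dseq ^^ Suc n) u m = 0"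
proof (induction n arbitrary: u)
  case 0
  then show ?case using pol0_Dseq by simp
next
  case (Suc n)
  have "(Dseq ^^ Suc (Suc n)) u = (Dseq ^^ Suc n) (Dseq u)"
    by (simp only: funpow_Suc_right o_def)
  then show ?case using Suc.IH[OF pol_Dseq[OF Suc.prems]] by simp
qed

lemma Dseq_pow_Suc: "(Dseq ^^ Suc k) v m = (Dseq ^^ k) v (Suc m) - (Dseq ^^ k) v m"
  by (simp add: Dseq_def)

lemma Dseq_pow_diff: "(Dseq ^^ k) (\<lambda>m. u m - w m) m = (Dseq ^^ k) u m - (Dseq ^^ k) w m"
  by (induction k arbitrary: m) (simp_all add: Dseq_pow_Suc del: funpow.simps)

lemma vanish:
  assumes "\<And>m. (Dseq ^^ Suc N) v m = 0" "\<And>m. m \<le> N \<Longrightarrow> v m = 0"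
  shows "v m = 0"
proof -
  have a: "m + k \<le> N \<Longrightarrow> (Dseq ^^ k) v m = 0" for k m
  proof (induction k arbitrary: m)
    case 0 then show ?case using assms(2) by simp
  next
    case (Suc k)
    then show ?case by (simp only: Dseq_pow_Suc) simp
  qed
  have b: "k \<le> Suc N \<Longrightarrow> (Dseq ^^ k) v m = 0" for k
  proof (induction m arbitrary: k)
    case 0 then show ?case using a[of 0 k] assms(1) by (cases "k = Suc N") auto
  next
    case (Suc m)
    show ?case
    proof (cases "k = Suc N")
      case True then show ?thesis using assms(1) by simp
    next
      case False
      then have "Suc k \<le> Suc N" using Suc.prems by simp
      have "(Dseq ^^ Suc k) v m = (Dseq ^^ k) v (Suc m) - (Dseq ^^ k) v m"
        by (rule Dseq_pow_Suc)
      then show ?thesis using Suc.IH[OF \<open>Suc k \<le> Suc N\<close>] Suc.IH[OF Suc.prems] by simp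
    qed
  qed
  show ?thesis using b[of 0] by simp
qed

definition lag :: "nat \<Rightarrow> nat \<Rightarrow> complex poly" where
  "lag N r = smult (inverse (\<Prod>s\<in>{..N}-{r}. (of_nat r - of_nat s)))
                   (\<Prod>s\<in>{..N}-{r}. [:- of_nat s, 1:])"

lemma lag_degree: assumes "r \<le> N" shows "degree (lag N r) \<le> N"
proof -
  have "degree (\<Prod>s\<in>{..N}-{r}. [:- of_nat s, 1::complex:]) \<le> (\<Sum>s\<in>{..N}-{r}. degree [:- of_nat s, 1::complex:])"
    using degree_prod_sum_le[of "{..N}-{r}" "\<lambda>s. [:- of_nat s, 1::complex:]"] by (simp add: o_def)
  also have "\<dots> = card ({..N}-{r})" by simp
  also have "\<dots> \<le> N" using \<open>r \<le> N\<close> by (simp add: card_Diff_singleton)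
  finally show ?thesis unfolding lag_def
    using degree_smult_le order_trans by blast
qed

lemma lag_eval:
  assumes "r \<le> N" "j \<le> N"
  shows "poly (lag N r) (of_nat j) = (if j = r then 1 else 0)"
proof (cases "j = r")
  case True
  have "(\<Prod>s\<in>{..N}-{r}. (of_nat r - of_nat s :: complex)) \<noteq> 0"
    by (subst prod_zero_iff) auto
  then show ?thesis using True by (simp add: lag_def poly_prod)
next
  case False
  then have "j \<in> {..N}-{r}" using assms by auto
  then have "(\<Prod>s\<in>{..N}-{r}. poly [:- of_nat s, 1:] (of_nat j :: complex)) = 0"
    by (intro prod_zero) auto
  then show ?thesis using False by (simp add: lag_def poly_prod)
qed

lemma pol_lin: "pol N (\<lambda>m. poly P (of_nat m))" if "degree P \<le> N"
  using that unfolding pol_def by blast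

lemma lag_sum_eval:
  assumes "j \<le> N"
  shows "(\<Sum>r\<le>N. u r * poly (lag N r) (of_nat j)) = u j"
proof -
  have "(\<Sum>r\<le>N. u r * poly (lag N r) (of_nat j)) = (\<Sum>r\<le>N. if r = j then u r else 0)"
    by (intro sum.cong) (auto simp: lag_eval assms)
  also have "\<dots> = u j" using assms by simp
  finally show ?thesis .
qed

lemma lag_poly_degree: "degree (\<Sum>r\<le>N. smult (u r) (lag N r)) \<le> N"
proof (intro degree_sum_le)
  fix r assume "r \<in> {..N}"
  then show "degree (smult (u r) (lag N r)) \<le> N"
    using degree_smult_le[of "u r" "lag N r"] lag_degree[of r N] by simp
qed simp

lemma pol_of_Dpow:
  assumes "\<And>m. (Dseq ^^ Suc N) u m = 0"
  shows "pol N u"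
proof -
  define P where "P = (\<Sum>r\<le>N. smult (u r) (lag N r))"
  have dP: "degree P \<le> N" unfolding P_def by (rule lag_poly_degree)
  have "u m - poly P (of_nat m) = 0" for m
  proof (rule vanish[where v = "\<lambda>m. u m - poly P (of_nat m)" and N = N])
    fix m
    show "(Dseq ^^ Suc N) (\<lambda>m. u m - poly P (of_nat m)) m = 0"
      by (subst Dseq_pow_diff) (simp add: assms pol_Dpow[OF pol_lin[OF dP]] del: funpow.simps)
  next
    fix m assume "m \<le> N"
    then show "u m - poly P (of_nat m) = 0"
      by (simp add: P_def poly_sum lag_sum_eval)
  qed
  then show ?thesis unfolding pol_def using dP by auto
qed

lemma lag_rep:
  assumes "pol N u"
  shows "u j = (\<Sum>r\<le>N. u r * poly (lag N r) (of_nat j))"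
proof -
  obtain Q where Q: "degree Q \<le> N" "\<And>m. u m = poly Q (of_nat m)"
    using assms unfolding pol_def by blast
  define P where "P = (\<Sum>r\<le>N. smult (u r) (lag N r))"
  have dP: "degree P \<le> N" unfolding P_def by (rule lag_poly_degree)
  have "u m - poly P (of_nat m) = 0" for m
  proof (rule vanish[where v = "\<lambda>m. u m - poly P (of_nat m)" and N = N])
    fix m
    show "(Dseq ^^ Suc N) (\<lambda>m. u m - poly P (of_nat m)) m = 0"
      by (subst Dseq_pow_diff) (simp add: pol_Dpow[OF assms] pol_Dpow[OF pol_lin[OF dP]] del: funpow.simps)
  next
    fix m assume "m \<le> N"
    then show "u m - poly P (of_nat m) = 0"
      by (simp add: P_def poly_sum lag_sum_eval)
  qed
  then have "u j = poly P (of_nat j)" by (simp add: algebra_simps)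
  then show ?thesis by (simp add: P_def poly_sum)
qed

lemma poly_eq_nat:
  fixes P Q :: "complex poly"
  assumes "\<And>m. poly P (of_nat m) = poly Q (of_nat m)"
  shows "P = Q"
proof (rule ccontr)
  assume "P \<noteq> Q"
  then have "P - Q \<noteq> 0" by simp
  then have f: "finite {x. poly (P - Q) x = 0}" by (rule poly_roots_finite)
  have "range (of_nat :: nat \<Rightarrow> complex) \<subseteq> {x. poly (P - Q) x = 0}"
  proof
    fix x assume "x \<in> range (of_nat :: nat \<Rightarrow> complex)"
    then obtain m where "x = of_nat m" by blast
    then show "x \<in> {x. poly (P - Q) x = 0}" using assms[of m] by simp
  qed
  then have "finite (range (of_nat :: nat \<Rightarrow> complex))" using f finite_subset by blast
  then have "finite (UNIV :: nat set)"
    using finite_imageD[of "of_nat :: nat \<Rightarrow> complex" UNIV] inj_of_nat by blast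
  then show False by simp
qed

definition dif :: "('a \<Rightarrow> 'a) \<Rightarrow> ('a \<Rightarrow> complex) \<Rightarrow> 'a \<Rightarrow> complex" where
  "dif \<phi> f = (\<lambda>x. f (\<phi> x) - f x)"

definition PP :: "nat \<Rightarrow> ('a::ab_semigroup_add \<Rightarrow> complex) \<Rightarrow> bool" where
  "PP n f \<longleftrightarrow> (\<forall>t x. (dif (\<lambda>x. x + t) ^^ Suc n) f x = 0)"

lemma add_mult_0[simp]: "add_mult s 0 t = s"
  by (simp add: add_mult_def)

lemma add_mult_Suc: "add_mult s (Suc m) t = add_mult s m t + t"
  by (simp add: add_mult_def)

lemma add_mult_plus_left: "add_mult (s + a) m t = add_mult s m t + a"
  by (induction m) (simp_all add: add_mult_Suc ac_simps)

lemma add_mult_add: "add_mult s (a + b) t = add_mult (add_mult s a t) b t"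
  by (induction b) (simp_all add: add_mult_Suc)

lemma add_mult_comm: "add_mult (add_mult s i a) j b = add_mult (add_mult s j b) i a"
  by (induction j) (simp_all add: add_mult_Suc add_mult_plus_left)

lemma add_mult_sum_dir: "add_mult s m (a + b) = add_mult (add_mult s m a) m b"
proof (induction m)
  case 0 then show ?case by simp
next
  case (Suc m)
  have "add_mult s (Suc m) (a + b) = add_mult (add_mult s m a) m b + (a + b)"
    by (simp only: add_mult_Suc Suc.IH)
  moreover have "add_mult (add_mult s (Suc m) a) (Suc m) b = add_mult (add_mult s m a) m b + b + a"
    by (simp only: add_mult_Suc add_mult_plus_left; metis add.assoc add.commute)
  ultimately show ?case by (metis add.assoc add.commute)
qed

lemma add_mult_self: "y + add_mult a k a = add_mult y (Suc k) a"
proof -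
  have "add_mult y (Suc k) a = add_mult (y + a) k a"
    using add_mult_add[of y 1 k a] by (simp add: add_mult_Suc)
  also have "\<dots> = add_mult (a + y) k a" by (simp add: ac_simps)
  also have "\<dots> = add_mult a k a + y" by (rule add_mult_plus_left)
  finally show ?thesis by (simp add: ac_simps)
qed

lemma add_mult_times: "add_mult s m (add_mult a k a) = add_mult s (m * Suc k) a"
proof (induction m)
  case 0 then show ?case by simp
next
  case (Suc m)
  have "add_mult s (Suc m) (add_mult a k a) = add_mult s (m * Suc k) a + add_mult a k a"
    by (simp add: add_mult_Suc Suc.IH)
  also have "\<dots> = add_mult (add_mult s (m * Suc k) a) (Suc k) a" by (rule add_mult_self)
  also have "\<dots> = add_mult s (m * Suc k + Suc k) a" by (simp only: add_mult_add)
  also have "\<dots> = add_mult s (Suc m * Suc k) a" by (metis mult_Suc add.commute)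
  finally show ?case .
qed

lemma add_mult_prod: "add_mult (s1, s2) m (t1, t2) = (add_mult s1 m t1, add_mult s2 m t2)"
  by (induction m) (simp_all add: add_mult_Suc)

lemma dif_seq:
  "(dif (\<lambda>x. x + t) ^^ k) f (add_mult s m t) = (Dseq ^^ k) (\<lambda>m. f (add_mult s m t)) m"
proof (induction k arbitrary: m)
  case 0 then show ?case by simp
next
  case (Suc k)
  have "(dif (\<lambda>x. x + t) ^^ Suc k) f (add_mult s m t)
      = (dif (\<lambda>x. x + t) ^^ k) f (add_mult s (Suc m) t) - (dif (\<lambda>x. x + t) ^^ k) f (add_mult s m t)"
    by (simp add: dif_def add_mult_Suc)
  also have "\<dots> = (Dseq ^^ Suc k) (\<lambda>m. f (add_mult s m t)) m"
    by (simp only: Suc.IH Dseq_pow_Suc)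
  finally show ?case .
qed

lemma PP_iff: "PP n f \<longleftrightarrow> (\<forall>s t. pol n (\<lambda>m. f (add_mult s m t)))"
proof
  assume "PP n f"
  show "\<forall>s t. pol n (\<lambda>m. f (add_mult s m t))"
  proof (intro allI pol_of_Dpow)
    fix s t m
    show "(Dseq ^^ Suc n) (\<lambda>m. f (add_mult s m t)) m = 0"
      using \<open>PP n f\<close> dif_seq[where t=t and k="Suc n" and f=f and s=s and m=m] unfolding PP_def by simp
  qed
next
  assume a: "\<forall>s t. pol n (\<lambda>m. f (add_mult s m t))"
  show "PP n f" unfolding PP_def
  proof (intro allI)
    fix t x
    show "(dif (\<lambda>x. x + t) ^^ Suc n) f x = 0"
      using dif_seq[where t=t and k="Suc n" and f=f and s=x and m=0] pol_Dpow[of n "\<lambda>m. f (add_mult x m t)" 0] a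
      by (simp del: funpow.simps)
  qed
qed

lemma coef_pol: "(\<exists>c::nat \<Rightarrow> complex. \<forall>m. u m = (\<Sum>k\<le>n. c k * of_nat m ^ k)) \<longleftrightarrow> pol n u"
proof
  assume "\<exists>c::nat \<Rightarrow> complex. \<forall>m. u m = (\<Sum>k\<le>n. c k * of_nat m ^ k)"
  then obtain c where c: "\<And>m. u m = (\<Sum>k\<le>n. c k * of_nat m ^ k)" by blast
  define P where "P = (\<Sum>k\<le>n. monom (c k) k)"
  have "degree P \<le> n" unfolding P_def
    by (intro degree_sum_le) (auto intro: order_trans[OF degree_monom_le])
  moreover have "u m = poly P (of_nat m)" for m
    by (simp add: c P_def poly_sum poly_monom)
  ultimately show "pol n u" unfolding pol_def by blast
next
  assume "pol n u"
  then obtain P where P: "degree P \<le> n" "\<And>m. u m = poly P (of_nat m)" unfolding pol_def by blast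
  have "u m = (\<Sum>k\<le>n. coeff P k * of_nat m ^ k)" for m
  proof -
    have "u m = poly (\<Sum>i\<le>n. monom (coeff P i) i) (of_nat m)"
      using poly_as_sum_of_monoms'[OF P(1)] P(2) by simp
    then show ?thesis by (simp add: poly_sum poly_monom)
  qed
  then show "\<exists>c::nat \<Rightarrow> complex. \<forall>m. u m = (\<Sum>k\<le>n. c k * of_nat m ^ k)" by blast
qed

lemma Pn_iff:
  fixes p :: "'a::{topological_space,ab_semigroup_add} \<Rightarrow> complex"
  shows "p \<in> Pn n \<longleftrightarrow> continuous_on UNIV p \<and> PP n p"
  unfolding Pn_def PP_iff coef_pol[symmetric] by simp

lemma dif_pow_diff:
  "(dif \<phi> ^^ k) (\<lambda>x. f x - g x) = (\<lambda>x. (dif \<phi> ^^ k) f x - (dif \<phi> ^^ k) g x)"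
  by (induction k) (simp_all add: dif_def algebra_simps)

lemma dif_pow_sum:
  "(dif \<phi> ^^ k) (\<lambda>x. \<Sum>i\<in>A. c i * f i x) = (\<lambda>x. \<Sum>i\<in>A. c i * (dif \<phi> ^^ k) (f i) x)"
proof (induction k)
  case 0 then show ?case by simp
next
  case (Suc k)
  show ?case
    unfolding funpow.simps o_def Suc unfolding dif_def
    by (simp add: sum_subtractf[symmetric] right_diff_distrib)
qed

lemma dif_pow_zero: "(dif \<phi> ^^ k) (\<lambda>x. 0) = (\<lambda>x. 0)"
  by (induction k) (simp_all add: dif_def)

lemma dif_pow_comp:
  assumes "\<And>x. \<phi> (\<psi> x) = \<psi> (\<phi> x)"
  shows "(dif \<phi> ^^ k) (\<lambda>x. f (\<psi> x)) = (\<lambda>x. (dif \<phi> ^^ k) f (\<psi> x))"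
  by (induction k) (simp_all add: dif_def assms)

lemma dif_pow_dif:
  assumes "\<And>x. \<phi> (\<psi> x) = \<psi> (\<phi> x)"
  shows "(dif \<phi> ^^ k) (dif \<psi> f) = dif \<psi> ((dif \<phi> ^^ k) f)"
proof -
  have "(dif \<phi> ^^ k) (dif \<psi> f) = (dif \<phi> ^^ k) (\<lambda>x. f (\<psi> x) - f x)" by (simp add: dif_def)
  also have "\<dots> = (\<lambda>x. (dif \<phi> ^^ k) (\<lambda>x. f (\<psi> x)) x - (dif \<phi> ^^ k) f x)" by (rule dif_pow_diff)
  also have "\<dots> = dif \<psi> ((dif \<phi> ^^ k) f)" by (simp add: dif_pow_comp[of \<phi> \<psi>, OF assms] dif_def)
  finally show ?thesis .
qed

lemma cql:
  fixes G :: "nat \<Rightarrow> nat \<Rightarrow> complex"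
  assumes rows: "\<And>i. pol (Suc n) (\<lambda>j. G i j)"
      and cols: "\<And>r. pol (Suc n) (\<lambda>i. G i r)"
      and diag: "\<And>c. pol (Suc n) (\<lambda>m. G (c*m) m)"
  shows "pol n (\<lambda>j. G 1 j - G 0 j)"
proof -
  define N where "N = Suc n"
  have "\<forall>r. \<exists>P. degree P \<le> N \<and> (\<forall>i. G i r = poly P (of_nat i))"
    using cols unfolding pol_def N_def by blast
  then obtain C where C: "\<And>r. degree (C r) \<le> N" "\<And>r i. G i r = poly (C r) (of_nat i)"
    by metis
  have rep: "G i j = (\<Sum>r\<le>N. poly (C r) (of_nat i) * poly (lag N r) (of_nat j))" for i j
    using lag_rep[OF rows[of i, folded N_def], of j] C(2) by simp
  define b where "b a l = (\<Sum>r\<le>N. coeff (C r) a * coeff (lag N r) l)" for a l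
  have key: "b k N = 0" if k1: "1 \<le> k" for k
  proof -
    define Z where "Z = (\<Sum>a\<le>N+k. monom (b a (N+k-a)) a)"
    have "poly Z (of_nat c) = 0" for c
    proof -
      define H where "H = (\<Sum>r\<le>N. pcompose (C r) [:0, of_nat c:] * lag N r)"
      have Hev: "poly H (of_nat m) = G (c*m) m" for m
        by (simp add: H_def rep poly_sum poly_pcompose algebra_simps)
      obtain Q where Q: "degree Q \<le> N" "\<And>m. G (c*m) m = poly Q (of_nat m)"
        using diag[of c] unfolding pol_def N_def by blast
      have "H = Q" by (rule poly_eq_nat) (simp add: Hev Q(2))
      then have "coeff H (N+k) = 0" using Q(1) k1 by (simp add: coeff_eq_0)
      moreover have "coeff H (N+k) = (\<Sum>r\<le>N. \<Sum>a\<le>N+k. of_nat c ^ a * coeff (C r) a * coeff (lag N r) (N+k-a))"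
        by (simp add: H_def coeff_sum coeff_mult coeff_pcompose_linear)
      moreover have "\<dots> = (\<Sum>a\<le>N+k. of_nat c ^ a * b a (N+k-a))"
        by (subst sum.swap) (simp add: b_def sum_distrib_left mult.assoc)
      moreover have "\<dots> = poly Z (of_nat c)"
        by (simp add: Z_def poly_sum poly_monom mult.commute)
      ultimately show ?thesis by simp
    qed
    then have "Z = 0" using poly_eq_nat[of Z 0] by simp
    then have "coeff Z k = 0" by simp
    moreover have "coeff Z k = b k N"
    proof -
      have "coeff Z k = (\<Sum>a\<le>N+k. if a = k then b a (N+k-a) else 0)"
        by (simp add: Z_def coeff_sum coeff_monom)
      also have "\<dots> = b k N" by simp
      finally show ?thesis .
    qed
    ultimately show ?thesis by simp
  qed
  define R where "R = (\<Sum>r\<le>N. smult (poly (C r) 1 - poly (C r) 0) (lag N r))"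
  have Rev: "G 1 j - G 0 j = poly R (of_nat j)" for j
    by (simp add: R_def rep poly_sum sum_subtractf[symmetric] algebra_simps)
  have dR: "degree R \<le> N" unfolding R_def
  proof (intro degree_sum_le)
    fix r assume "r \<in> {..N}"
    then show "degree (smult (poly (C r) 1 - poly (C r) 0) (lag N r)) \<le> N"
      using degree_smult_le[of _ "lag N r"] lag_degree[of r N] by (meson atMost_iff order_trans)
  qed simp
  define E where "E = (\<Sum>r\<le>N. smult (coeff (lag N r) N) (C r))"
  have cE: "coeff E a = b a N" for a
    by (simp add: E_def b_def coeff_sum mult.commute)
  have "degree E \<le> 0"
  proof (rule degree_le, intro allI impI)
    fix a :: nat assume "0 < a"
    show "coeff E a = 0"
    proof (cases "a \<le> N")
      case True then show ?thesis using key[of a] \<open>0 < a\<close> cE by simp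
    next
      case False
      then have "coeff (C r) a = 0" for r using C(1)[of r] by (simp add: coeff_eq_0)
      then show ?thesis by (simp add: cE b_def)
    qed
  qed
  then obtain e where "E = pCons e 0" using degree_eq_zeroE by blast
  then have "poly E 1 - poly E 0 = 0" by simp
  moreover have "poly E 1 - poly E 0 = coeff R N"
    by (simp add: E_def R_def coeff_sum poly_sum sum_subtractf[symmetric] algebra_simps)
  ultimately have "coeff R N = 0" by simp
  then have "degree R \<le> n" using degree_le_pred dR unfolding N_def by blast
  then show ?thesis unfolding pol_def using Rev by blast
qed

lemma DEG:
  fixes f :: "'a::ab_semigroup_add \<Rightarrow> complex"
  assumes "PP (Suc n) f"
  shows "PP n (dif (\<lambda>x. x + \<sigma>) f)"
  unfolding PP_iff
proof (intro allI)
  fix s t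
  define G where "G i j = f (add_mult (add_mult s i \<sigma>) j t)" for i j
  have P: "\<And>s t. pol (Suc n) (\<lambda>m. f (add_mult s m t))" using assms unfolding PP_iff by blast
  have "pol n (\<lambda>j. G 1 j - G 0 j)"
  proof (rule cql)
    fix i show "pol (Suc n) (\<lambda>j. G i j)" unfolding G_def by (rule P)
  next
    fix r show "pol (Suc n) (\<lambda>i. G i r)" unfolding G_def add_mult_comm[of s _ \<sigma> r t] by (rule P)
  next
    fix c
    show "pol (Suc n) (\<lambda>m. G (c*m) m)"
    proof (cases c)
      case 0 then show ?thesis unfolding G_def by (simp add: P)
    next
      case (Suc k)
      have "G (c*m) m = f (add_mult s m (add_mult \<sigma> k \<sigma> + t))" for m
        unfolding G_def add_mult_sum_dir add_mult_times Suc by (simp add: mult.commute)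
      then show ?thesis by (simp add: P)
    qed
  qed
  moreover have "G 1 j - G 0 j = dif (\<lambda>x. x + \<sigma>) f (add_mult s j t)" for j
    by (simp add: G_def dif_def add_mult_Suc add_mult_plus_left)
  ultimately show "pol n (\<lambda>m. dif (\<lambda>x. x + \<sigma>) f (add_mult s m t))" by simp
qed

definition Bs :: "'b \<Rightarrow> ('a \<times> 'b::ab_semigroup_add) \<Rightarrow> 'a \<times> 'b" where
  "Bs t = (\<lambda>z. (fst z, snd z + t))"
definition As :: "'a \<Rightarrow> ('a::ab_semigroup_add \<times> 'b) \<Rightarrow> 'a \<times> 'b" where
  "As t = (\<lambda>z. (fst z + t, snd z))"

lemma PP0_inv: "PP 0 f \<Longrightarrow> f (z + \<tau>) = f z"
  unfolding PP_def by (simp add: dif_def)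

lemma base_B:
  fixes p :: "'a::ab_semigroup_add \<times> 'b::ab_semigroup_add \<Rightarrow> complex"
  assumes "PP 0 p" shows "dif (Bs t) p z = 0"
proof -
  obtain x y where z: "z = (x, y)" by (cases z)
  define a :: 'a where "a = undefined"
  have "p (x, y + t) = p ((x, y + t) + (a, t))" using PP0_inv[OF assms] by metis
  moreover have "p (x, y) = p ((x, y) + (a, t + t))" using PP0_inv[OF assms] by metis
  ultimately have "p (x, y + t) = p (x, y)" by (simp add: ac_simps)
  then show ?thesis by (simp add: dif_def Bs_def z)
qed

lemma base_A:
  fixes p :: "'a::ab_semigroup_add \<times> 'b::ab_semigroup_add \<Rightarrow> complex"
  assumes "PP 0 p" shows "dif (As t) p z = 0"
proof -
  obtain x y where z: "z = (x, y)" by (cases z)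
  define a :: 'b where "a = undefined"
  have "p (x + t, y) = p ((x + t, y) + (t, a))" using PP0_inv[OF assms] by metis
  moreover have "p (x, y) = p ((x, y) + (t + t, a))" using PP0_inv[OF assms] by metis
  ultimately have "p (x + t, y) = p (x, y)" by (simp add: ac_simps)
  then show ?thesis by (simp add: dif_def As_def z)
qed

lemma PP_iter: "PP (k + m) f \<Longrightarrow> PP m ((dif (\<lambda>x. x + \<sigma>) ^^ k) f)"
proof (induction k arbitrary: f)
  case 0 then show ?case by simp
next
  case (Suc k)
  have "PP (k + m) (dif (\<lambda>x. x + \<sigma>) f)" using DEG Suc.prems by simp
  then have "PP m ((dif (\<lambda>x. x + \<sigma>) ^^ k) (dif (\<lambda>x. x + \<sigma>) f))" by (rule Suc.IH)
  then show ?case by (simp only: funpow_Suc_right o_def)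
qed

lemma PP_dif_B:
  fixes p :: "'a::ab_semigroup_add \<times> 'b::ab_semigroup_add \<Rightarrow> complex"
  assumes "PP (Suc n) p" shows "PP n (dif (Bs t) p)"
  unfolding PP_def
proof (intro allI)
  fix \<tau> :: "'a \<times> 'b" and z
  have com: "(\<lambda>x. x + \<tau>) (Bs t x) = Bs t ((\<lambda>x. x + \<tau>) x)" for x
    by (cases x; cases \<tau>) (simp add: Bs_def ac_simps)
  have "PP 0 ((dif (\<lambda>x. x + \<tau>) ^^ Suc n) p)" using PP_iter[of "Suc n" 0 p \<tau>] assms by simp
  then have "dif (Bs t) ((dif (\<lambda>x. x + \<tau>) ^^ Suc n) p) z = 0" by (rule base_B)
  then show "(dif (\<lambda>x. x + \<tau>) ^^ Suc n) (dif (Bs t) p) z = 0"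
    by (simp only: dif_pow_dif[of "\<lambda>x. x + \<tau>" "Bs t", OF com])
qed

lemma PP_dif_A:
  fixes p :: "'a::ab_semigroup_add \<times> 'b::ab_semigroup_add \<Rightarrow> complex"
  assumes "PP (Suc n) p" shows "PP n (dif (As t) p)"
  unfolding PP_def
proof (intro allI)
  fix \<tau> :: "'a \<times> 'b" and z
  have com: "(\<lambda>x. x + \<tau>) (As t x) = As t ((\<lambda>x. x + \<tau>) x)" for x
    by (cases x; cases \<tau>) (simp add: As_def ac_simps)
  have "PP 0 ((dif (\<lambda>x. x + \<tau>) ^^ Suc n) p)" using PP_iter[of "Suc n" 0 p \<tau>] assms by simp
  then have "dif (As t) ((dif (\<lambda>x. x + \<tau>) ^^ Suc n) p) z = 0" by (rule base_A)
  then show "(dif (\<lambda>x. x + \<tau>) ^^ Suc n) (dif (As t) p) z = 0"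
    by (simp only: dif_pow_dif[of "\<lambda>x. x + \<tau>" "As t", OF com])
qed

lemma B_pow:
  fixes p :: "'a::ab_semigroup_add \<times> 'b::ab_semigroup_add \<Rightarrow> complex"
  assumes "PP n p" shows "e \<le> n \<Longrightarrow> PP (n - e) ((dif (Bs t) ^^ e) p)"
proof (induction e)
  case 0 then show ?case using assms by simp
next
  case (Suc e)
  then have "PP (Suc (n - Suc e)) ((dif (Bs t) ^^ e) p)" using Suc_diff_Suc by fastforce
  then show ?case using PP_dif_B by simp
qed

lemma B_pow_zero:
  fixes p :: "'a::ab_semigroup_add \<times> 'b::ab_semigroup_add \<Rightarrow> complex"
  assumes "PP n p" shows "(dif (Bs t) ^^ Suc n) p z = 0"
  using base_B[OF B_pow[OF assms, of n t, simplified]] by simp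

lemma A_pow:
  fixes p :: "'a::ab_semigroup_add \<times> 'b::ab_semigroup_add \<Rightarrow> complex"
  assumes "PP n p" shows "e \<le> n \<Longrightarrow> PP (n - e) ((dif (As t) ^^ e) p)"
proof (induction e)
  case 0 then show ?case using assms by simp
next
  case (Suc e)
  then have "PP (Suc (n - Suc e)) ((dif (As t) ^^ e) p)" using Suc_diff_Suc by fastforce
  then show ?case using PP_dif_A by simp
qed

lemma A_pow_zero:
  fixes p :: "'a::ab_semigroup_add \<times> 'b::ab_semigroup_add \<Rightarrow> complex"
  assumes "PP n p" shows "(dif (As t) ^^ Suc n) p z = 0"
  using base_A[OF A_pow[OF assms, of n t, simplified]] by simp

lemma slice_A: "(dif (\<lambda>x. x + t) ^^ k) (\<lambda>x. p (x, y)) = (\<lambda>x. (dif (As t) ^^ k) p (x, y))"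
  by (induction k) (simp_all add: dif_def As_def)

lemma slice_B: "(dif (\<lambda>y. y + t) ^^ k) (\<lambda>y. p (x, y)) = (\<lambda>y. (dif (Bs t) ^^ k) p (x, y))"
  by (induction k) (simp_all add: dif_def Bs_def)

lemma PP_slice1:
  fixes p :: "'a::ab_semigroup_add \<times> 'b::ab_semigroup_add \<Rightarrow> complex"
  assumes "PP n p" shows "PP n (\<lambda>x. p (x, y))"
  unfolding PP_def slice_A using A_pow_zero[OF assms] by simp

lemma PP_slice2:
  fixes p :: "'a::ab_semigroup_add \<times> 'b::ab_semigroup_add \<Rightarrow> complex"
  assumes "PP n p" shows "PP n (\<lambda>y. p (x, y))"
  unfolding PP_def slice_B using B_pow_zero[OF assms] by simp

lemma cont_slice1: "continuous_on UNIV p \<Longrightarrow> continuous_on UNIV (\<lambda>x. p (x, c))"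
  by (rule continuous_on_compose2[OF _ continuous_on_Pair[OF continuous_on_id continuous_on_const]]) auto

lemma cont_slice2: "continuous_on UNIV p \<Longrightarrow> continuous_on UNIV (\<lambda>y. p (c, y))"
  by (rule continuous_on_compose2[OF _ continuous_on_Pair[OF continuous_on_const continuous_on_id]]) auto

lemma cont_slice_Bpow:
  assumes "continuous_on UNIV p"
  shows "continuous_on UNIV (\<lambda>x. (dif (Bs t) ^^ e) p (x, y))"
proof (induction e arbitrary: y)
  case 0 then show ?case using cont_slice1[OF assms] by simp
next
  case (Suc e)
  have "(\<lambda>x. (dif (Bs t) ^^ Suc e) p (x, y)) =
        (\<lambda>x. (dif (Bs t) ^^ e) p (x, y + t) - (dif (Bs t) ^^ e) p (x, y))"
    by (simp only: funpow.simps o_def) (simp add: dif_def Bs_def)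
  moreover have "continuous_on UNIV (\<lambda>x. (dif (Bs t) ^^ e) p (x, y + t) - (dif (Bs t) ^^ e) p (x, y))"
    by (rule continuous_on_diff[OF Suc.IH Suc.IH])
  ultimately show ?case by (simp only:)
qed

lemma pol_add: "pol n u \<Longrightarrow> pol n v \<Longrightarrow> pol n (\<lambda>m. u m + v m)"
  unfolding pol_def
proof (elim exE conjE)
  fix P Q assume "degree P \<le> n" "\<forall>m. u m = poly P (of_nat m)" "degree Q \<le> n" "\<forall>m. v m = poly Q (of_nat m)"
  then show "\<exists>R. degree R \<le> n \<and> (\<forall>m. u m + v m = poly R (of_nat m))"
    by (intro exI[of _ "P + Q"]) (simp add: degree_add_le)
qed

lemma pol_cmult: "pol n u \<Longrightarrow> pol n (\<lambda>m. c * u m)"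
  unfolding pol_def
proof (elim exE conjE)
  fix P assume "degree P \<le> n" "\<forall>m. u m = poly P (of_nat m)"
  then show "\<exists>R. degree R \<le> n \<and> (\<forall>m. c * u m = poly R (of_nat m))"
    by (intro exI[of _ "smult c P"]) (simp add: order_trans[OF degree_smult_le])
qed

lemma pol_mult: "pol a u \<Longrightarrow> pol b v \<Longrightarrow> pol (a + b) (\<lambda>m. u m * v m)"
  unfolding pol_def
proof (elim exE conjE)
  fix P Q assume "degree P \<le> a" "\<forall>m. u m = poly P (of_nat m)" "degree Q \<le> b" "\<forall>m. v m = poly Q (of_nat m)"
  then show "\<exists>R. degree R \<le> a + b \<and> (\<forall>m. u m * v m = poly R (of_nat m))"
    by (intro exI[of _ "P * Q"]) (simp add: order_trans[OF degree_mult_le])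
qed

lemma PP_lin:
  assumes "PP n f" "PP n g" shows "PP n (\<lambda>x. c * f x + g x)"
  unfolding PP_iff
proof (intro allI)
  fix s t
  have "pol n (\<lambda>m. c * f (add_mult s m t))"
    using pol_cmult[of n "\<lambda>m. f (add_mult s m t)" c] assms(1) unfolding PP_iff by blast
  moreover have "pol n (\<lambda>m. g (add_mult s m t))" using assms(2) unfolding PP_iff by blast
  ultimately show "pol n (\<lambda>m. c * f (add_mult s m t) + g (add_mult s m t))" by (rule pol_add)
qed

lemma PP_mono: "PP a f \<Longrightarrow> a \<le> b \<Longrightarrow> PP b f"
  unfolding PP_iff pol_def by (meson order_trans)

lemma Pn_lin:
  fixes f g :: "'a::{topological_space,ab_semigroup_add} \<Rightarrow> complex"
  assumes "f \<in> Pn n" "g \<in> Pn n" shows "(\<lambda>x. c * f x + g x) \<in> Pn n"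
  using assms unfolding Pn_iff
  by (auto intro!: PP_lin continuous_on_add continuous_on_mult continuous_on_const)

lemma Pn_zero: "(\<lambda>x. 0) \<in> Pn n"
proof -
  have "PP n (\<lambda>x::'a. 0)" unfolding PP_def dif_pow_zero by simp
  then show ?thesis unfolding Pn_iff by simp
qed

lemma Pn_mono:
  fixes f :: "'a::{topological_space,ab_semigroup_add} \<Rightarrow> complex"
  shows "f \<in> Pn a \<Longrightarrow> a \<le> b \<Longrightarrow> f \<in> Pn b"
  unfolding Pn_iff using PP_mono by blast

lemma Pn_sum:
  fixes F :: "nat \<Rightarrow> 'a::{topological_space,ab_semigroup_add} \<Rightarrow> complex"
  shows "(\<And>i. i < N \<Longrightarrow> F i \<in> Pn n) \<Longrightarrow> (\<lambda>z. \<Sum>i<N. F i z) \<in> Pn n"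
proof (induction N)
  case 0 then show ?case using Pn_zero by simp
next
  case (Suc N)
  have "(\<lambda>z. 1 * F N z + (\<Sum>i<N. F i z)) \<in> Pn n"
    using Suc by (intro Pn_lin) auto
  then show ?case by (simp add: add.commute)
qed

lemma tensor_term:
  fixes f :: "'a::{topological_space,ab_semigroup_add} \<Rightarrow> complex"
    and g :: "'b::{topological_space,ab_semigroup_add} \<Rightarrow> complex"
  assumes "m \<le> n" "f \<in> Pn m" "g \<in> Pn (n - m)"
  shows "(\<lambda>z. f (fst z) * g (snd z)) \<in> Pn n"
  unfolding Pn_iff
proof
  have cf: "continuous_on UNIV f" and cg: "continuous_on UNIV g" using assms unfolding Pn_iff by auto
  show "continuous_on UNIV (\<lambda>z. f (fst z) * g (snd z))"
    by (intro continuous_on_mult continuous_on_compose2[OF cf continuous_on_fst]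
        continuous_on_compose2[OF cg continuous_on_snd] continuous_on_id) auto
  have pf: "PP m f" and pg: "PP (n - m) g" using assms unfolding Pn_iff by auto
  show "PP n (\<lambda>z. f (fst z) * g (snd z))"
    unfolding PP_iff
  proof (intro allI)
    fix s t :: "'a \<times> 'b"
    obtain s1 s2 where s: "s = (s1, s2)" by (cases s)
    obtain t1 t2 where t: "t = (t1, t2)" by (cases t)
    have "pol m (\<lambda>k. f (add_mult s1 k t1))" using pf unfolding PP_iff by blast
    moreover have "pol (n - m) (\<lambda>k. g (add_mult s2 k t2))" using pg unfolding PP_iff by blast
    ultimately have "pol (m + (n - m)) (\<lambda>k. f (add_mult s1 k t1) * g (add_mult s2 k t2))"
      by (rule pol_mult)
    then show "pol n (\<lambda>k. f (fst (add_mult s k t)) * g (snd (add_mult s k t)))"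
      using assms(1) by (simp add: s t add_mult_prod)
  qed
qed

lemma tensor_sum_sub:
  fixes p :: "'a::{topological_space,ab_semigroup_add} \<times> 'b::{topological_space,ab_semigroup_add} \<Rightarrow> complex"
  assumes "p \<in> tensor_sum n" shows "p \<in> Pn n"
proof -
  from assms obtain N :: nat and m :: "nat \<Rightarrow> nat" and f g where H: "\<forall>i<N. m i \<le> n \<and> f i \<in> Pn (m i) \<and> g i \<in> Pn (n - m i)"
      and p: "p = (\<lambda>(s, t). \<Sum>i<N. f i s * g i t)"
    unfolding tensor_sum_def by blast
  have "(\<lambda>z. \<Sum>i<N. f i (fst z) * g i (snd z)) \<in> Pn n"
  proof (rule Pn_sum[where F = "\<lambda>i z. f i (fst z) * g i (snd z)"])
    fix i assume "i < N"
    then show "(\<lambda>z. f i (fst z) * g i (snd z)) \<in> Pn n"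
      using H tensor_term[of "m i" n "f i" "g i"] by blast
  qed
  moreover have "p = (\<lambda>z. \<Sum>i<N. f i (fst z) * g i (snd z))" by (simp add: p case_prod_beta')
  ultimately show ?thesis by simp
qed

lemma tensor_zero: "(\<lambda>z. 0) \<in> tensor_sum n"
  unfolding tensor_sum_def by (intro CollectI exI[of _ 0]) auto

lemma tensor_add:
  fixes f :: "'a::{topological_space,ab_semigroup_add} \<Rightarrow> complex"
    and g :: "'b::{topological_space,ab_semigroup_add} \<Rightarrow> complex"
  assumes "q \<in> tensor_sum n" "k \<le> n" "f \<in> Pn k" "g \<in> Pn (n - k)"
  shows "(\<lambda>z. q z + f (fst z) * g (snd z)) \<in> tensor_sum n"
proof -
  obtain N :: nat and m :: "nat \<Rightarrow> nat" and ff gg where H: "\<forall>i<N. m i \<le> n \<and> ff i \<in> Pn (m i) \<and> gg i \<in> Pn (n - m i)"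
      and q: "q = (\<lambda>(s, t). \<Sum>i<N. ff i s * gg i t)"
    using assms(1) unfolding tensor_sum_def by blast
  define m' where "m' = m(N := k)"
  define f' where "f' = ff(N := f)"
  define g' where "g' = gg(N := g)"
  have "\<forall>i<Suc N. m' i \<le> n \<and> f' i \<in> Pn (m' i) \<and> g' i \<in> Pn (n - m' i)"
    using H assms by (auto simp: m'_def f'_def g'_def less_Suc_eq)
  moreover have "(\<lambda>z. q z + f (fst z) * g (snd z)) = (\<lambda>(s, t). \<Sum>i<Suc N. f' i s * g' i t)"
    by (auto simp: q f'_def g'_def fun_eq_iff)
  ultimately show ?thesis unfolding tensor_sum_def by blast
qed

inductive evc :: "(('a \<Rightarrow> complex) \<Rightarrow> complex) \<Rightarrow> bool" where
  evc0: "evc (\<lambda>f. 0)"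
| evcS: "evc l \<Longrightarrow> evc (\<lambda>f. l f + c * f a)"

lemma evc_lin: "evc l \<Longrightarrow> l (\<lambda>x. c * f x + g x) = c * l f + l g"
  by (induction rule: evc.induct) (simp_all add: algebra_simps)

lemma evc_diff_c: "evc l \<Longrightarrow> l (\<lambda>x. f x - c * g x) = l f - c * l g"
  by (induction rule: evc.induct) (simp_all add: algebra_simps)

lemma evc_diff: "evc l \<Longrightarrow> l (\<lambda>x. f x - g x) = l f - l g"
  by (induction rule: evc.induct) (simp_all add: algebra_simps)

lemma evc_zero: "evc l \<Longrightarrow> l (\<lambda>x. 0) = 0"
  by (induction rule: evc.induct) simp_all

lemma evc_sum: "evc l \<Longrightarrow> l (\<lambda>x. \<Sum>i\<in>A. e i * g i x) = (\<Sum>i\<in>A. e i * l (g i))"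
  by (induction rule: evc.induct) (simp_all add: algebra_simps sum.distrib sum_distrib_left)

lemma dif_Suc: "(dif \<phi> ^^ Suc k) f x = (dif \<phi> ^^ k) f (\<phi> x) - (dif \<phi> ^^ k) f x"
  by (simp only: funpow.simps o_apply dif_def[of \<phi> "(dif \<phi> ^^ k) f"])

lemma evc_comb: assumes "evc l1" "evc l2" shows "evc (\<lambda>f. l1 f + c * l2 f)"
  using assms(2)
proof (induction rule: evc.induct)
  case evc0 then show ?case using assms(1) by simp
next
  case (evcS l d a)
  have "evc (\<lambda>f. (l1 f + c * l f) + (c * d) * f a)" using evcS by (intro evc.evcS)
  moreover have "(\<lambda>f. (l1 f + c * l f) + (c * d) * f a) = (\<lambda>f. l1 f + c * (l f + d * f a))"
    by (simp add: fun_eq_iff algebra_simps)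
  ultimately show ?case by simp
qed

lemma evc_point: "evc (\<lambda>f. f a)"
  using evc.evcS[OF evc0, of 1 a] by simp

lemma evc_dif: "evc (\<lambda>f. (dif \<phi> ^^ k) f x)"
proof (induction k arbitrary: x)
  case 0 then show ?case using evc_point by simp
next
  case (Suc k)
  have "evc (\<lambda>f. (dif \<phi> ^^ k) f (\<phi> x) + (-1) * (dif \<phi> ^^ k) f x)"
    by (rule evc_comb[OF Suc Suc])
  then show ?case by (simp only: dif_Suc) simp
qed

lemma evc_cont:
  assumes "evc l" "continuous_on UNIV p"
  shows "continuous_on UNIV (\<lambda>y. l (\<lambda>x. p (x, y)))"
  using assms(1)
proof (induction rule: evc.induct)
  case evc0 then show ?case by simp
next
  case (evcS l c a)
  show ?case
    by (intro continuous_on_add evcS continuous_on_mult continuous_on_const cont_slice2[OF assms(2)])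
qed

lemma evc_difB:
  assumes "evc l"
  shows "(dif (\<lambda>y. y + t) ^^ k) (\<lambda>y. l (\<lambda>x. p (x, y))) y = l (\<lambda>x. (dif (Bs t) ^^ k) p (x, y))"
proof (induction k arbitrary: y)
  case 0 then show ?case by simp
next
  case (Suc k)
  have "(dif (\<lambda>y. y + t) ^^ Suc k) (\<lambda>y. l (\<lambda>x. p (x, y))) y
      = l (\<lambda>x. (dif (Bs t) ^^ k) p (x, y + t)) - l (\<lambda>x. (dif (Bs t) ^^ k) p (x, y))"
    by (simp only: dif_Suc Suc)
  also have "\<dots> = l (\<lambda>x. (dif (Bs t) ^^ k) p (x, y + t) - (dif (Bs t) ^^ k) p (x, y))"
    by (simp add: evc_diff[OF assms])
  also have "\<dots> = l (\<lambda>x. (dif (Bs t) ^^ Suc k) p (x, y))"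
    by (simp only: dif_Suc) (simp add: Bs_def)
  finally show ?case .
qed

definition subsp :: "('a \<Rightarrow> complex) set \<Rightarrow> bool" where
  "subsp U \<longleftrightarrow> (\<lambda>x. 0) \<in> U \<and> (\<forall>f\<in>U. \<forall>g\<in>U. \<forall>c. (\<lambda>x. c * f x + g x) \<in> U)"

lemma subsp_diff: "subsp U \<Longrightarrow> f \<in> U \<Longrightarrow> g \<in> U \<Longrightarrow> (\<lambda>x. f x - c * g x) \<in> U"
  unfolding subsp_def
proof (elim conjE)
  assume "\<forall>f\<in>U. \<forall>g\<in>U. \<forall>c. (\<lambda>x. c * f x + g x) \<in> U" "f \<in> U" "g \<in> U"
  then have "(\<lambda>x. (-c) * g x + f x) \<in> U" by blast
  then show ?thesis by (simp add: algebra_simps)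
qed

fun sumL :: "((('a \<Rightarrow> complex) \<Rightarrow> complex) \<times> ('a \<Rightarrow> complex)) list \<Rightarrow> ('a \<Rightarrow> complex) \<Rightarrow> 'a \<Rightarrow> complex" where
  "sumL [] f x = 0"
| "sumL (q # L) f x = fst q f * snd q x + sumL L f x"

lemma sumL_map:
  assumes "\<forall>q\<in>set L. evc (fst q)"
  shows "sumL (map (\<lambda>q. (\<lambda>f. fst q f - l0 f * fst q w, snd q)) L) f x
       = sumL L (\<lambda>x. f x - l0 f * w x) x"
  using assms by (induction L) (simp_all add: evc_diff_c)

lemma rinterp:
  fixes v :: "'i \<Rightarrow> 'a \<Rightarrow> complex"
  assumes "finite I" "subsp U" "subsp W" "U \<subseteq> W"
    and "\<forall>f\<in>W. \<exists>c. f = (\<lambda>x. \<Sum>i\<in>I. c i * v i x)"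
    and "\<forall>w\<in>W. w \<notin> U \<longrightarrow> (\<exists>l. evc l \<and> (\<forall>u\<in>U. l u = 0) \<and> l w = 1)"
  shows "\<exists>L. (\<forall>q\<in>set L. evc (fst q) \<and> (\<forall>u\<in>U. fst q u = 0) \<and> snd q \<in> W)
            \<and> (\<forall>f\<in>W. (\<lambda>x. f x - sumL L f x) \<in> U)"
  using assms(1,3,4,5,6)
proof (induction "card I" arbitrary: I v W rule: less_induct)
  case less
  show ?case
  proof (cases "W \<subseteq> U")
    case True
    then show ?thesis by (intro exI[of _ "[]"]) auto
  next
    case False
    then obtain w where w: "w \<in> W" "w \<notin> U" by blast
    then obtain l0 where l0: "evc l0" "\<forall>u\<in>U. l0 u = 0" "l0 w = 1" using less.prems(5) by blast
    obtain c where c: "w = (\<lambda>x. \<Sum>i\<in>I. c i * v i x)" using less.prems(4) w by blast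
    have "\<exists>i0\<in>I. c i0 \<noteq> 0"
    proof (rule ccontr)
      assume "\<not> (\<exists>i0\<in>I. c i0 \<noteq> 0)"
      then have "w = (\<lambda>x. 0)" using c by simp
      then show False using w assms(2) unfolding subsp_def by simp
    qed
    then obtain i0 where i0: "i0 \<in> I" "c i0 \<noteq> 0" by blast
    define W' where "W' = {f \<in> W. l0 f = 0}"
    define I' where "I' = I - {i0}"
    define v' where "v' i = (\<lambda>x. v i x - l0 (v i) * w x)" for i
    have cardI': "card I' < card I" unfolding I'_def using card_Diff1_less[OF less.prems(1) i0(1)] .
    have finI': "finite I'" unfolding I'_def using less.prems(1) by simp
    have subW': "subsp W'"
      using less.prems(2) unfolding subsp_def W'_def by (auto simp: evc_lin[OF l0(1)] evc_zero[OF l0(1)])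
    have UW': "U \<subseteq> W'" unfolding W'_def using less.prems(3) l0(2) by auto
    have spanW': "\<forall>f\<in>W'. \<exists>e. f = (\<lambda>x. \<Sum>i\<in>I'. e i * v' i x)"
    proof
      fix f assume fW': "f \<in> W'"
      then have fW: "f \<in> W" and lf: "l0 f = 0" unfolding W'_def by auto
      obtain d where d: "f = (\<lambda>x. \<Sum>i\<in>I. d i * v i x)" using less.prems(4) fW by blast
      define \<kappa> where "\<kappa> = d i0 / c i0"
      define e where "e i = d i - \<kappa> * c i" for i
      define S where "S = (\<lambda>x. \<Sum>i\<in>I'. e i * v i x)"
      have S: "S x = f x - \<kappa> * w x" for x
      proof -
        have "f x = d i0 * v i0 x + (\<Sum>i\<in>I'. d i * v i x)"
          using d i0 less.prems(1) unfolding I'_def by (simp add: sum.remove)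
        moreover have "w x = c i0 * v i0 x + (\<Sum>i\<in>I'. c i * v i x)"
          using c i0 less.prems(1) unfolding I'_def by (simp add: sum.remove)
        moreover have "S x = (\<Sum>i\<in>I'. d i * v i x) - \<kappa> * (\<Sum>i\<in>I'. c i * v i x)"
          by (simp add: S_def e_def sum_subtractf sum_distrib_left algebra_simps)
        moreover have "\<kappa> * c i0 = d i0" using i0(2) by (simp add: \<kappa>_def)
        then have e1: "\<kappa> * (c i0 * v i0 x) = d i0 * v i0 x" by (metis mult.assoc)
        ultimately have "f x - \<kappa> * w x = (d i0 * v i0 x + (\<Sum>i\<in>I'. d i * v i x))
              - (\<kappa> * (c i0 * v i0 x) + \<kappa> * (\<Sum>i\<in>I'. c i * v i x))"
          by (simp add: distrib_left)
        also have "\<dots> = (\<Sum>i\<in>I'. d i * v i x) - \<kappa> * (\<Sum>i\<in>I'. c i * v i x)"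
          by (simp add: e1)
        finally show ?thesis using \<open>S x = _\<close> by simp
      qed
      have lS: "l0 S = - \<kappa>"
      proof -
        have "S = (\<lambda>x. f x - \<kappa> * w x)" using S by (simp add: fun_eq_iff)
        then show ?thesis using evc_diff_c[OF l0(1)] lf l0(3) by simp
      qed
      have "(\<lambda>x. \<Sum>i\<in>I'. e i * v' i x) = (\<lambda>x. S x - (\<Sum>i\<in>I'. e i * l0 (v i)) * w x)"
        by (simp add: v'_def S_def algebra_simps sum_subtractf sum_distrib_left sum_distrib_right)
      also have "(\<Sum>i\<in>I'. e i * l0 (v i)) = l0 S"
        unfolding S_def by (rule evc_sum[OF l0(1), symmetric])
      finally have "(\<lambda>x. \<Sum>i\<in>I'. e i * v' i x) = f" using S lS by (simp add: fun_eq_iff)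
      then show "\<exists>e. f = (\<lambda>x. \<Sum>i\<in>I'. e i * v' i x)" by metis
    qed
    have sepW': "\<forall>w'\<in>W'. w' \<notin> U \<longrightarrow> (\<exists>l. evc l \<and> (\<forall>u\<in>U. l u = 0) \<and> l w' = 1)"
      using less.prems(5) unfolding W'_def by auto
    obtain L' where L': "\<forall>q\<in>set L'. evc (fst q) \<and> (\<forall>u\<in>U. fst q u = 0) \<and> snd q \<in> W'"
        "\<forall>f\<in>W'. (\<lambda>x. f x - sumL L' f x) \<in> U"
      using less.hyps[OF cardI' finI' subW' UW' spanW' sepW'] by blast
    define L where "L = (l0, w) # map (\<lambda>q. (\<lambda>f. fst q f - l0 f * fst q w, snd q)) L'"
    have P1: "\<forall>q\<in>set L. evc (fst q) \<and> (\<forall>u\<in>U. fst q u = 0) \<and> snd q \<in> W"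
    proof
      fix q assume "q \<in> set L"
      then consider "q = (l0, w)" | q' where "q' \<in> set L'" "q = (\<lambda>f. fst q' f - l0 f * fst q' w, snd q')"
        unfolding L_def by auto
      then show "evc (fst q) \<and> (\<forall>u\<in>U. fst q u = 0) \<and> snd q \<in> W"
      proof cases
        case 1 then show ?thesis using l0 w by simp
      next
        case 2
        have "evc (\<lambda>f. fst q' f + (- fst q' w) * l0 f)" using L'(1) 2(1) l0(1) by (blast intro: evc_comb)
        moreover have "(\<lambda>f. fst q' f + (- fst q' w) * l0 f) = (\<lambda>f. fst q' f - l0 f * fst q' w)"
          by (simp add: fun_eq_iff algebra_simps)
        ultimately show ?thesis using 2 L'(1) l0(2) unfolding W'_def by auto
      qed
    qed
    have P2: "\<forall>f\<in>W. (\<lambda>x. f x - sumL L f x) \<in> U"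
    proof
      fix f assume fW: "f \<in> W"
      define f' where "f' = (\<lambda>x. f x - l0 f * w x)"
      have "f' \<in> W" unfolding f'_def by (rule subsp_diff[OF less.prems(2) fW w(1)])
      moreover have "l0 f' = 0" unfolding f'_def using evc_diff_c[OF l0(1)] l0(3) by simp
      ultimately have "f' \<in> W'" unfolding W'_def by simp
      then have "(\<lambda>x. f' x - sumL L' f' x) \<in> U" using L'(2) by blast
      moreover have "sumL L f x = l0 f * w x + sumL L' f' x" for x
        unfolding L_def f'_def using L'(1) by (simp add: sumL_map)
      ultimately show "(\<lambda>x. f x - sumL L f x) \<in> U" by (simp add: f'_def algebra_simps)
    qed
    show ?thesis using P1 P2 by blast
  qed
qed

definition Qs :: "nat \<Rightarrow> ('a::{topological_space,ab_semigroup_add} \<Rightarrow> complex) set" where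
  "Qs k = (if k = 0 then {\<lambda>x. 0} else Pn (k - 1))"

lemma Qs_Suc: "Qs (Suc d) = Pn d" by (simp add: Qs_def)

lemma subsp_Pn: "subsp (Pn n)" using Pn_zero Pn_lin unfolding subsp_def by blast

lemma subsp_Qs: "subsp (Qs k)"
proof (cases k)
  case 0 then show ?thesis by (simp add: Qs_def subsp_def)
next
  case (Suc m) then show ?thesis using subsp_Pn by (simp add: Qs_def)
qed

lemma Qs_sub: "Qs d \<subseteq> Pn d"
proof (cases d)
  case 0 then show ?thesis by (simp add: Qs_def Pn_zero)
next
  case (Suc m) then show ?thesis using Pn_mono[of _ m "Suc m"] by (auto simp: Qs_def)
qed

lemma sep:
  fixes w :: "'a::{topological_space,ab_semigroup_add} \<Rightarrow> complex"
  assumes "w \<in> Pn d" "w \<notin> Qs d"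
  shows "\<exists>l. evc l \<and> (\<forall>u\<in>Qs d. l u = 0) \<and> l w = 1"
proof (cases d)
  case 0
  then have "w \<noteq> (\<lambda>x. 0)" using assms(2) by (simp add: Qs_def)
  then obtain a where a: "w a \<noteq> 0" by (meson ext)
  have "evc (\<lambda>f. 0 + (1 / w a) * f a)" by (rule evc.evcS[OF evc0])
  moreover have "\<forall>u\<in>Qs d. 0 + (1 / w a) * u a = 0" using 0 by (simp add: Qs_def)
  ultimately show ?thesis using a by (intro exI[of _ "\<lambda>f. 0 + (1 / w a) * f a"]) simp
next
  case (Suc d')
  then have "w \<notin> Pn d'" using assms(2) by (simp add: Qs_def)
  moreover have "continuous_on UNIV w" using assms(1) unfolding Pn_iff by simp
  ultimately have "\<not> PP d' w" unfolding Pn_iff by simp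
  then obtain t x where tx: "(dif (\<lambda>x. x + t) ^^ Suc d') w x \<noteq> 0" unfolding PP_def by blast
  define \<gamma> where "\<gamma> = (dif (\<lambda>x. x + t) ^^ Suc d') w x"
  define l where "l = (\<lambda>f. 0 + (1 / \<gamma>) * (dif (\<lambda>x. x + t) ^^ Suc d') f x)"
  have "evc l" unfolding l_def by (rule evc_comb[OF evc0 evc_dif])
  moreover have "\<forall>u\<in>Qs d. l u = 0"
  proof
    fix u :: "'a \<Rightarrow> complex" assume "u \<in> Qs d"
    then have "u \<in> Pn d'" using Suc by (simp add: Qs_def)
    then have "PP d' u" unfolding Pn_iff by simp
    then have "(dif (\<lambda>x. x + t) ^^ Suc d') u x = 0" unfolding PP_def by blast
    then show "l u = 0" unfolding l_def by simp
  qed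
  moreover have "l w = 1" using tx unfolding l_def \<gamma>_def[symmetric] by simp
  ultimately show ?thesis by blast
qed

lemma sumL_Pn:
  fixes p :: "'a::{topological_space,ab_semigroup_add} \<times> 'b::{topological_space,ab_semigroup_add} \<Rightarrow> complex"
  assumes "d \<le> n" "\<forall>q\<in>set L. snd q \<in> Pn d \<and> (\<lambda>y. fst q (\<lambda>x. p (x, y))) \<in> Pn (n - d)"
  shows "(\<lambda>z. sumL L (\<lambda>x. p (x, snd z)) (fst z)) \<in> Pn n"
  using assms(2)
proof (induction L)
  case Nil then show ?case using Pn_zero by simp
next
  case (Cons q L)
  have t: "(\<lambda>z. snd q (fst z) * fst q (\<lambda>x. p (x, snd z))) \<in> Pn n"
    using Cons.prems assms(1) tensor_term[of d n "snd q" "\<lambda>y. fst q (\<lambda>x. p (x, y))"] by simp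
  have "(\<lambda>z. 1 * (snd q (fst z) * fst q (\<lambda>x. p (x, snd z))) + sumL L (\<lambda>x. p (x, snd z)) (fst z)) \<in> Pn n"
    using Cons by (intro Pn_lin t) auto
  then show ?case by (simp add: mult.commute)
qed

lemma sumL_tensor:
  fixes p :: "'a::{topological_space,ab_semigroup_add} \<times> 'b::{topological_space,ab_semigroup_add} \<Rightarrow> complex"
  assumes "d \<le> n" "\<forall>q\<in>set L. snd q \<in> Pn d \<and> (\<lambda>y. fst q (\<lambda>x. p (x, y))) \<in> Pn (n - d)"
  shows "q0 \<in> tensor_sum n \<Longrightarrow> (\<lambda>z. q0 z + sumL L (\<lambda>x. p (x, snd z)) (fst z)) \<in> tensor_sum n"
  using assms(2)
proof (induction L arbitrary: q0)
  case Nil then show ?case by simp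
next
  case (Cons q L)
  have "(\<lambda>z. q0 z + snd q (fst z) * fst q (\<lambda>x. p (x, snd z))) \<in> tensor_sum n"
    using Cons.prems assms(1) tensor_add[of q0 n d "snd q" "\<lambda>y. fst q (\<lambda>x. p (x, y))"] by simp
  then have "(\<lambda>z. (\<lambda>z. q0 z + snd q (fst z) * fst q (\<lambda>x. p (x, snd z))) z + sumL L (\<lambda>x. p (x, snd z)) (fst z)) \<in> tensor_sum n"
    using Cons by (intro Cons.IH) auto
  then show ?case by (simp add: algebra_simps)
qed

lemma main_ind:
  fixes p :: "'a::{topological_space,ab_semigroup_add} \<times> 'b::{topological_space,ab_semigroup_add} \<Rightarrow> complex"
  assumes fd: "fin_dim_fun (Pn n :: ('a \<Rightarrow> complex) set)"
  shows "k \<le> Suc n \<Longrightarrow> p \<in> Pn n \<Longrightarrow> (\<forall>y. (\<lambda>x. p (x, y)) \<in> Qs k) \<Longrightarrow> p \<in> tensor_sum n"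
proof (induction k arbitrary: p)
  case 0
  then have "p z = 0" for z by (cases z) (auto simp: Qs_def fun_eq_iff)
  then have "p = (\<lambda>z. 0)" by auto
  then show ?case using tensor_zero by simp
next
  case (Suc d)
  have dn: "d \<le> n" using Suc.prems(1) by simp
  obtain F :: "('a \<Rightarrow> complex) set" where F: "finite F" "\<forall>p\<in>Pn n. \<exists>c. p = (\<lambda>x. \<Sum>f\<in>F. c f * f x)"
    using fd unfolding fin_dim_fun_def by blast
  have span: "\<forall>f\<in>Pn d. \<exists>c. f = (\<lambda>x. \<Sum>i\<in>F. c i * id i x)"
    using F(2) Pn_mono[OF _ dn] by (simp add: id_def) blast
  have sepd: "\<forall>w\<in>Pn d. w \<notin> Qs d \<longrightarrow> (\<exists>l. evc l \<and> (\<forall>u\<in>Qs d. l u = 0) \<and> l w = 1)"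
    using sep by blast
  obtain L where L: "\<forall>q\<in>set L. evc (fst q) \<and> (\<forall>u\<in>Qs d. fst q u = 0) \<and> snd q \<in> Pn d"
      "\<forall>f\<in>Pn d. (\<lambda>x. f x - sumL L f x) \<in> (Qs d :: ('a \<Rightarrow> complex) set)"
    using rinterp[OF F(1) subsp_Qs subsp_Pn Qs_sub span sepd] by blast
  have pc: "continuous_on UNIV p" and pP: "PP n p" using Suc.prems(2) unfolding Pn_iff by auto
  have gq: "(\<lambda>y. fst q (\<lambda>x. p (x, y))) \<in> Pn (n - d)" if q: "q \<in> set L" for q
  proof -
    have ev: "evc (fst q)" using L(1) q by blast
    have "PP (n - d) (\<lambda>y. fst q (\<lambda>x. p (x, y)))" unfolding PP_def
    proof (intro allI)
      fix t y
      have "(\<lambda>x. (dif (Bs t) ^^ Suc (n - d)) p (x, y)) \<in> Qs d"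
      proof (cases d)
        case 0
        then show ?thesis using B_pow_zero[OF pP] by (simp add: Qs_def)
      next
        case (Suc d')
        then have e: "Suc (n - d) = n - d'" using dn by simp
        have "PP (n - (n - d')) ((dif (Bs t) ^^ (n - d')) p)" by (rule B_pow[OF pP]) simp
        then have "PP d' ((dif (Bs t) ^^ (n - d')) p)" using Suc dn by simp
        then have "PP d' (\<lambda>x. (dif (Bs t) ^^ (n - d')) p (x, y))" by (rule PP_slice1)
        then show ?thesis using Suc e cont_slice_Bpow[OF pc] by (simp add: Qs_def Pn_iff)
      qed
      then have "fst q (\<lambda>x. (dif (Bs t) ^^ Suc (n - d)) p (x, y)) = 0" using L(1) q by blast
      then show "(dif (\<lambda>y. y + t) ^^ Suc (n - d)) (\<lambda>y. fst q (\<lambda>x. p (x, y))) y = 0"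
        by (simp only: evc_difB[OF ev])
    qed
    then show ?thesis unfolding Pn_iff using evc_cont[OF ev pc] by simp
  qed
  have Lp: "\<forall>q\<in>set L. snd q \<in> Pn d \<and> (\<lambda>y. fst q (\<lambda>x. p (x, y))) \<in> Pn (n - d)"
    using L(1) gq by blast
  define S where "S = (\<lambda>z. sumL L (\<lambda>x. p (x, snd z)) (fst z))"
  define p' where "p' = (\<lambda>z. p z - S z)"
  have SP: "S \<in> Pn n" unfolding S_def by (rule sumL_Pn[OF dn Lp])
  have "(\<lambda>z. (-1) * S z + p z) \<in> Pn n" by (rule Pn_lin[OF SP Suc.prems(2)])
  then have p'P: "p' \<in> Pn n" by (simp add: p'_def)
  have "\<forall>y. (\<lambda>x. p' (x, y)) \<in> Qs d"
  proof
    fix y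
    have "(\<lambda>x. p (x, y)) \<in> Pn d" using Suc.prems(3) by (simp add: Qs_Suc)
    then have "(\<lambda>x. p (x, y) - sumL L (\<lambda>x. p (x, y)) x) \<in> Qs d"
      using L(2)[rule_format, of "\<lambda>x. p (x, y)"] by simp
    then show "(\<lambda>x. p' (x, y)) \<in> Qs d" by (simp add: p'_def S_def)
  qed
  then have "p' \<in> tensor_sum n" using Suc.IH[OF _ p'P] Suc.prems(1) by simp
  then have "(\<lambda>z. p' z + sumL L (\<lambda>x. p (x, snd z)) (fst z)) \<in> tensor_sum n"
    by (rule sumL_tensor[OF dn Lp])
  then show ?case by (simp add: p'_def S_def)
qed

theorem lemma3p2:
  fixes n :: nat
  assumes "top_ab_semigroup TYPE('a::{topological_space, ab_semigroup_add})"
      and "top_ab_semigroup TYPE('b::{topological_space, ab_semigroup_add})"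
      and "fin_dim_fun (Pn n :: ('a \<Rightarrow> complex) set)"
  shows "(Pn n :: ('a \<times> 'b \<Rightarrow> complex) set) = tensor_sum n"
proof
  show "tensor_sum n \<subseteq> (Pn n :: ('a \<times> 'b \<Rightarrow> complex) set)" using tensor_sum_sub by blast
next
  show "(Pn n :: ('a \<times> 'b \<Rightarrow> complex) set) \<subseteq> tensor_sum n"
  proof
    fix p :: "'a \<times> 'b \<Rightarrow> complex"
    assume p: "p \<in> Pn n"
    have "\<forall>y. (\<lambda>x. p (x, y)) \<in> Qs (Suc n)"
      using p unfolding Qs_Suc Pn_iff by (auto intro: cont_slice1 PP_slice1)
    then show "p \<in> tensor_sum n" using main_ind[OF assms(3), of "Suc n" p] p by blast
  qed
qed

end
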